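(* Let $n\geq 2$ and let $L_n$ be the graph of linear $[n]$-phenylene (defined in the context). Then the base polynomial counting distances between pairs consisting of a degree-2 vertex and a degree-3 vertex of $L_n$ is \begin{eqnarray*} H^{2,3}_{b}(L_{n}) &=& 2(2n-2)x+4\sum_{k=2}^{n-1}(n-k+1)x^{3k-2}+4\sum_{k=1}^{n-1}(2n-2k+1)x^{3k-1}\\ &&+4\sum_{k=1}^{n-1}(n-k+2)x^{3k}+4x^{3n-2}. \end{eqnarray*}
   Context: All graphs are finite, simple and connected; $d(u,v)$ denotes the shortest-path distance and $d_u$ the degree of a vertex $u$. For a graph $G$ and degrees $p\le q$, the base polynomial is $H^{p,q}_{b}(G)=\sum x^{d(u,v)}$, where the sum runs over all unordered pairs $\{u,v\}$ of distinct vertices of $G$ such that one of $u,v$ has degree $p$ and the other has degree $q$. Linear $[n]$-phenylene $L_n$: take $n$ hexagons $H_1,\dots,H_n$; hexagon $H_i$ is the 6-cycle $a_i b_i c_i d_i e_i f_i a_i$. For each $i=1,\dots,n-1$ add the two edges $b_i f_{i+1}$ and $c_i e_{i+1}$, so that $b_i c_i e_{i+1} f_{i+1}$ is a 4-cycle joining consecutive hexagons. Thus $L_n$ has $6n$ vertices, $2n+4$ of degree 2 and $4n-4$ of degree 3. *)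

theory Defs
  imports Main "HOL-Computational_Algebra.Polynomial"
begin

definition walk :: "'a set \<Rightarrow> ('a \<Rightarrow> 'a \<Rightarrow> bool) \<Rightarrow> 'a list \<Rightarrow> bool" where
  "walk V E xs \<longleftrightarrow> xs \<noteq> [] \<and> set xs \<subseteq> V \<and> (\<forall>i. Suc i < length xs \<longrightarrow> E (xs ! i) (xs ! Suc i))"

definition gdist :: "'a set \<Rightarrow> ('a \<Rightarrow> 'a \<Rightarrow> bool) \<Rightarrow> 'a \<Rightarrow> 'a \<Rightarrow> nat" where
  "gdist V E u v = (LEAST k. \<exists>xs. walk V E xs \<and> hd xs = u \<and> last xs = v \<and> length xs = Suc k)"

definition gdeg :: "'a set \<Rightarrow> ('a \<Rightarrow> 'a \<Rightarrow> bool) \<Rightarrow> 'a \<Rightarrow> nat" where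
  "gdeg V E u = card {w \<in> V. E u w}"

definition base_pairs :: "'a set \<Rightarrow> ('a \<Rightarrow> 'a \<Rightarrow> bool) \<Rightarrow> nat \<Rightarrow> nat \<Rightarrow> 'a set set" where
  "base_pairs V E p q = {{u, v} | u v. u \<in> V \<and> v \<in> V \<and> u \<noteq> v \<and>
       gdeg V E u = p \<and> gdeg V E v = q}"

definition pair_dist :: "'a set \<Rightarrow> ('a \<Rightarrow> 'a \<Rightarrow> bool) \<Rightarrow> 'a set \<Rightarrow> nat" where
  "pair_dist V E e = (THE k. \<exists>u v. e = {u, v} \<and> k = gdist V E u v)"

definition base_poly :: "'a set \<Rightarrow> ('a \<Rightarrow> 'a \<Rightarrow> bool) \<Rightarrow> nat \<Rightarrow> nat \<Rightarrow> nat poly" where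
  "base_poly V E p q = (\<Sum>e \<in> base_pairs V E p q. monom 1 (pair_dist V E e))"

text \<open>Vertex (i, c) with 1 \<le> i \<le> n is the c-th vertex of hexagon H_i, where
  c = 0,1,2,3,4,5 stands for a,b,c,d,e,f.\<close>

definition phen_V :: "nat \<Rightarrow> (nat \<times> nat) set" where
  "phen_V n = {1..n} \<times> {0..<6}"

definition phen_E0 :: "nat \<Rightarrow> nat \<times> nat \<Rightarrow> nat \<times> nat \<Rightarrow> bool" where
  "phen_E0 n x y \<longleftrightarrow> x \<in> phen_V n \<and> y \<in> phen_V n \<and>
     ((fst x = fst y \<and> snd y = (snd x + 1) mod 6) \<comment> \<open>hexagon edges\<close>
      \<or> (fst y = fst x + 1 \<and> snd x = 1 \<and> snd y = 5) \<comment> \<open>b_i f_{i+1}\<close>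
      \<or> (fst y = fst x + 1 \<and> snd x = 2 \<and> snd y = 4))"

definition phen_E :: "nat \<Rightarrow> nat \<times> nat \<Rightarrow> nat \<times> nat \<Rightarrow> bool" where
  "phen_E n x y \<longleftrightarrow> phen_E0 n x y \<or> phen_E0 n y x"

end

theory Submission
  imports Defs
begin

lemma walk_single: "walk V E [x] \<longleftrightarrow> x \<in> V"
  by (auto simp: walk_def)

lemma walk_Cons2: "walk V E (x # y # ys) \<longleftrightarrow> x \<in> V \<and> E x y \<and> walk V E (y # ys)"
proof
  assume w: "walk V E (x # y # ys)"
  have "E x y" using w unfolding walk_def by (metis length_Cons nth_Cons_0 nth_Cons_Suc zero_less_Suc Suc_less_eq)
  moreover have "walk V E (y # ys)" using w unfolding walk_def
    by auto
  ultimately show "x \<in> V \<and> E x y \<and> walk V E (y # ys)" using w by (auto simp: walk_def)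
next
  assume h: "x \<in> V \<and> E x y \<and> walk V E (y # ys)"
  show "walk V E (x # y # ys)" unfolding walk_def
  proof (intro conjI allI impI)
    show "set (x # y # ys) \<subseteq> V" using h by (auto simp: walk_def)
  next
    fix i assume "Suc i < length (x # y # ys)"
    then show "E ((x # y # ys) ! i) ((x # y # ys) ! Suc i)"
      using h by (cases i) (auto simp: walk_def)
  qed simp
qed

lemma gdist_char:
  assumes D0: "\<And>z. z \<in> V \<Longrightarrow> D z z = 0"
    and Dedge: "\<And>x y z. E x y \<Longrightarrow> x \<in> V \<Longrightarrow> y \<in> V \<Longrightarrow> z \<in> V \<Longrightarrow> D x z \<le> D y z + 1"
    and Ddesc: "\<And>x z. x \<in> V \<Longrightarrow> z \<in> V \<Longrightarrow> x \<noteq> z \<Longrightarrow> \<exists>y. y \<in> V \<and> E x y \<and> D y z + 1 = D x z"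
    and u: "u \<in> V" and v: "v \<in> V"
  shows "gdist V E u v = D u v"
proof -
  have low: "walk V E xs \<Longrightarrow> last xs = v \<Longrightarrow> D (hd xs) v \<le> length xs - 1" for xs
  proof (induction xs)
    case Nil then show ?case by (simp add: walk_def)
  next
    case (Cons x ys)
    show ?case
    proof (cases ys)
      case Nil then show ?thesis using Cons.prems D0 v by simp
    next
      case (Cons y zs)
      have w: "x \<in> V" "E x y" "walk V E (y # zs)" using Cons.prems(1) \<open>ys = y # zs\<close> by (auto simp: walk_Cons2)
      have yV: "y \<in> V" using w(3) by (auto simp: walk_def)
      have "D y v \<le> length ys - 1" using Cons.IH[OF _ ] Cons.prems w \<open>ys = y # zs\<close> by auto
      moreover have "D x v \<le> D y v + 1" using Dedge[OF w(2) w(1) yV v] .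
      ultimately show ?thesis using \<open>ys = y # zs\<close> by simp
    qed
  qed
  have up: "\<forall>x. x \<in> V \<longrightarrow> D x v = k \<longrightarrow> (\<exists>xs. walk V E xs \<and> hd xs = x \<and> last xs = v \<and> length xs = Suc k)" for k
  proof (induction k)
    case 0
    show ?case
    proof (intro allI impI)
      fix x assume x: "x \<in> V" "D x v = 0"
      have "x = v"
      proof (rule ccontr)
        assume "x \<noteq> v"
        then obtain y where "D y v + 1 = D x v" using Ddesc[OF x(1) v] by blast
        then show False using x by simp
      qed
      then show "\<exists>xs. walk V E xs \<and> hd xs = x \<and> last xs = v \<and> length xs = Suc 0"
        using x by (intro exI[of _ "[x]"]) (simp add: walk_single)
    qed
  next
    case (Suc k)
    show ?case
    proof (intro allI impI)
      fix x assume x: "x \<in> V" "D x v = Suc k"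
      have "x \<noteq> v" using x D0 v by auto
      then obtain y where y: "y \<in> V" "E x y" "D y v + 1 = D x v" using Ddesc[OF x(1) v] by blast
      then have "D y v = k" using x by simp
      then obtain ys where ys: "walk V E ys" "hd ys = y" "last ys = v" "length ys = Suc k"
        using Suc.IH y(1) by blast
      then obtain zs where zs: "ys = y # zs" by (cases ys) auto
      show "\<exists>xs. walk V E xs \<and> hd xs = x \<and> last xs = v \<and> length xs = Suc (Suc k)"
        using ys zs x y by (intro exI[of _ "x # ys"]) (auto simp: walk_Cons2)
    qed
  qed
  obtain xs where xs: "walk V E xs" "hd xs = u" "last xs = v" "length xs = Suc (D u v)"
    using up u by blast
  show ?thesis unfolding gdist_def
  proof (rule Least_equality)
    show "\<exists>xs. walk V E xs \<and> hd xs = u \<and> last xs = v \<and> length xs = Suc (D u v)" using xs by blast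
  next
    fix y assume "\<exists>xs. walk V E xs \<and> hd xs = u \<and> last xs = v \<and> length xs = Suc y"
    then obtain ys where "walk V E ys" "hd ys = u" "last ys = v" "length ys = Suc y" by blast
    then show "D u v \<le> y" using low by fastforce
  qed
qed

definition hd6 :: "nat \<Rightarrow> nat \<Rightarrow> nat" where
  "hd6 c e = (let t = (if c \<le> e then e - c else c - e) in min t (6 - t))"

definition mm :: "nat \<Rightarrow> nat \<Rightarrow> nat" where
  "mm c e = min (hd6 c 1 + hd6 5 e) (hd6 c 2 + hd6 4 e)"

fun DD :: "nat \<times> nat \<Rightarrow> nat \<times> nat \<Rightarrow> nat" where
  "DD (i, c) (j, e) = (if i = j then hd6 c e else if i < j then 3 * (j - i) - 2 + mm c e
      else 3 * (i - j) - 2 + mm e c)"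

lemma six_cases: "(c::nat) < 6 \<Longrightarrow> c = 0 \<or> c = 1 \<or> c = 2 \<or> c = 3 \<or> c = 4 \<or> c = 5"
  by auto

lemma hd6_sym: "hd6 c e = hd6 e c" by (simp add: hd6_def)

lemma DD_sym: "DD x y = DD y x"
  by (cases x; cases y) (auto simp: hd6_sym)

lemma DD_refl: "DD x x = 0"
  by (cases x) (simp add: hd6_def)

lemma fin_hex:
  assumes "c < 6" "e < 6"
  shows "hd6 c e \<le> hd6 ((c+1) mod 6) e + 1 \<and> hd6 ((c+1) mod 6) e \<le> hd6 c e + 1
       \<and> mm c e \<le> mm ((c+1) mod 6) e + 1 \<and> mm ((c+1) mod 6) e \<le> mm c e + 1
       \<and> mm e c \<le> mm e ((c+1) mod 6) + 1 \<and> mm e ((c+1) mod 6) \<le> mm e c + 1"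
  using six_cases[OF assms(1)] six_cases[OF assms(2)]
  by (elim disjE) (simp_all add: hd6_def mm_def)

lemma hex_edge:
  assumes "c < 6" "e < 6"
  shows "DD (i, c) (j, e) \<le> DD (i, (c+1) mod 6) (j, e) + 1 \<and>
         DD (i, (c+1) mod 6) (j, e) \<le> DD (i, c) (j, e) + 1"
  using fin_hex[OF assms] by (auto; linarith)

lemma fin_cross:
  assumes "e < 6"
  shows "hd6 1 e \<le> hd6 5 e + 3 \<and> hd6 5 e \<le> hd6 1 e + 3 \<and> hd6 2 e \<le> hd6 4 e + 3 \<and> hd6 4 e \<le> hd6 2 e + 3
    \<and> hd6 1 e \<le> mm e 5 + 2 \<and> mm e 5 \<le> hd6 1 e \<and> hd6 2 e \<le> mm e 4 + 2 \<and> mm e 4 \<le> hd6 2 e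
    \<and> hd6 5 e \<le> mm 1 e + 2 \<and> mm 1 e \<le> hd6 5 e \<and> hd6 4 e \<le> mm 2 e + 2 \<and> mm 2 e \<le> hd6 4 e
    \<and> mm 1 e + 2 = mm 5 e \<and> mm 2 e + 2 = mm 4 e \<and> mm e 5 + 2 = mm e 1 \<and> mm e 4 + 2 = mm e 2"
  using six_cases[OF assms] by (elim disjE) (simp_all add: hd6_def mm_def)

lemma cross_edge:
  assumes "e < 6"
  shows "DD (i, 1) (j, e) \<le> DD (Suc i, 5) (j, e) + 1 \<and> DD (Suc i, 5) (j, e) \<le> DD (i, 1) (j, e) + 1
       \<and> DD (i, 2) (j, e) \<le> DD (Suc i, 4) (j, e) + 1 \<and> DD (Suc i, 4) (j, e) \<le> DD (i, 2) (j, e) + 1"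
  using fin_cross[OF assms] by (auto; linarith)

lemma fin_desc:
  assumes "c < 6" "e < 6"
  shows "(c \<noteq> e \<longrightarrow> hd6 ((c+1) mod 6) e + 1 = hd6 c e \<or> hd6 ((c+5) mod 6) e + 1 = hd6 c e)
    \<and> (c \<noteq> 1 \<and> c \<noteq> 2 \<longrightarrow> mm ((c+1) mod 6) e + 1 = mm c e \<or> mm ((c+5) mod 6) e + 1 = mm c e)
    \<and> (c \<noteq> 4 \<and> c \<noteq> 5 \<longrightarrow> mm e ((c+1) mod 6) + 1 = mm e c \<or> mm e ((c+5) mod 6) + 1 = mm e c)
    \<and> mm 1 e = hd6 5 e \<and> mm 2 e = hd6 4 e \<and> mm e 5 = hd6 1 e \<and> mm e 4 = hd6 2 e
    \<and> mm 1 e + 2 = mm 5 e \<and> mm 2 e + 2 = mm 4 e \<and> mm e 5 + 2 = mm e 1 \<and> mm e 4 + 2 = mm e 2"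
  using six_cases[OF assms(1)] six_cases[OF assms(2)]
  by (elim disjE) (simp_all add: hd6_def mm_def)

lemma desc_arith:
  assumes c: "c < 6" and e: "e < 6" and ne: "(i, c) \<noteq> (j, e)"
  shows "DD (i, (c+1) mod 6) (j, e) + 1 = DD (i, c) (j, e) \<or> DD (i, (c+5) mod 6) (j, e) + 1 = DD (i, c) (j, e)
    \<or> (c = 1 \<and> i < j \<and> DD (Suc i, 5) (j, e) + 1 = DD (i, c) (j, e))
    \<or> (c = 2 \<and> i < j \<and> DD (Suc i, 4) (j, e) + 1 = DD (i, c) (j, e))
    \<or> (c = 5 \<and> j < i \<and> DD (i - 1, 1) (j, e) + 1 = DD (i, c) (j, e))
    \<or> (c = 4 \<and> j < i \<and> DD (i - 1, 2) (j, e) + 1 = DD (i, c) (j, e))"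
proof -
  note f = fin_desc[OF c e]
  consider "i = j" | "i < j" | "j < i" by linarith
  then show ?thesis
  proof cases
    case 1
    have X: "\<And>c'. DD (i, c') (j, e) = hd6 c' e" using 1 by simp
    have "c \<noteq> e" using ne 1 by simp
    then have "hd6 ((c+1) mod 6) e + 1 = hd6 c e \<or> hd6 ((c+5) mod 6) e + 1 = hd6 c e" using f by blast
    then show ?thesis unfolding X by blast
  next
    case 2
    have X: "\<And>c'. DD (i, c') (j, e) = 3 * (j - i) - 2 + mm c' e" using 2 by simp
    show ?thesis
    proof (cases "c = 1 \<or> c = 2")
      case True
      have Y: "DD (Suc i, 5) (j, e) + 1 = DD (i, 1) (j, e) \<and> DD (Suc i, 4) (j, e) + 1 = DD (i, 2) (j, e)"
      proof (cases "j = Suc i")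
        case True
        then show ?thesis using f by simp
      next
        case False
        then have "Suc i < j" using 2 by simp
        then have Z: "DD (Suc i, 5) (j, e) = 3 * (j - Suc i) - 2 + mm 5 e"
          "DD (Suc i, 4) (j, e) = 3 * (j - Suc i) - 2 + mm 4 e" by auto
        have "mm 1 e + 2 = mm 5 e" "mm 2 e + 2 = mm 4 e" using f by simp_all
        then show ?thesis unfolding X Z using \<open>Suc i < j\<close> by linarith
      qed
      show ?thesis using True Y 2 by blast
    next
      case False
      then have "mm ((c+1) mod 6) e + 1 = mm c e \<or> mm ((c+5) mod 6) e + 1 = mm c e" using f by blast
      then have "DD (i, (c+1) mod 6) (j, e) + 1 = DD (i, c) (j, e) \<or> DD (i, (c+5) mod 6) (j, e) + 1 = DD (i, c) (j, e)"
      proof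
        assume h: "mm ((c+1) mod 6) e + 1 = mm c e"
        show ?thesis unfolding X using h 2 by linarith
      next
        assume h: "mm ((c+5) mod 6) e + 1 = mm c e"
        show ?thesis unfolding X using h 2 by linarith
      qed
      then show ?thesis by blast
    qed
  next
    case 3
    have X: "\<And>c'. DD (i, c') (j, e) = 3 * (i - j) - 2 + mm e c'" using 3 by simp
    show ?thesis
    proof (cases "c = 4 \<or> c = 5")
      case True
      have Y: "DD (i - 1, 1) (j, e) + 1 = DD (i, 5) (j, e) \<and> DD (i - 1, 2) (j, e) + 1 = DD (i, 4) (j, e)"
      proof (cases "i = Suc j")
        case True
        then show ?thesis using f by simp
      next
        case False
        then have "j < i - 1" using 3 by simp
        then have Z: "DD (i - 1, 1) (j, e) = 3 * (i - 1 - j) - 2 + mm e 1"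
          "DD (i - 1, 2) (j, e) = 3 * (i - 1 - j) - 2 + mm e 2" by auto
        have "mm e 5 + 2 = mm e 1" "mm e 4 + 2 = mm e 2" using f by simp_all
        then show ?thesis unfolding X Z using \<open>j < i - 1\<close> by linarith
      qed
      show ?thesis using True Y 3 by blast
    next
      case False
      then have "mm e ((c+1) mod 6) + 1 = mm e c \<or> mm e ((c+5) mod 6) + 1 = mm e c" using f by blast
      then have "DD (i, (c+1) mod 6) (j, e) + 1 = DD (i, c) (j, e) \<or> DD (i, (c+5) mod 6) (j, e) + 1 = DD (i, c) (j, e)"
      proof
        assume h: "mm e ((c+1) mod 6) + 1 = mm e c"
        show ?thesis unfolding X using h 3 by linarith
      next
        assume h: "mm e ((c+5) mod 6) + 1 = mm e c"
        show ?thesis unfolding X using h 3 by linarith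
      qed
      then show ?thesis by blast
    qed
  qed
qed

lemma phen_E_V: "phen_E n x y \<Longrightarrow> x \<in> phen_V n \<and> y \<in> phen_V n"
  by (auto simp: phen_E_def phen_E0_def)

lemma phen_V_iff: "(i, c) \<in> phen_V n \<longleftrightarrow> 1 \<le> i \<and> i \<le> n \<and> c < 6"
  by (auto simp: phen_V_def)

lemma DD_edge0:
  assumes "phen_E0 n x y" "z \<in> phen_V n"
  shows "DD x z \<le> DD y z + 1 \<and> DD y z \<le> DD x z + 1"
proof -
  obtain i c where x: "x = (i, c)" by (cases x)
  obtain i' c' where y: "y = (i', c')" by (cases y)
  obtain j e where z: "z = (j, e)" by (cases z)
  have c: "c < 6" and e: "e < 6" using assms x z by (auto simp: phen_E0_def phen_V_def)
  consider "i' = i" "c' = (c + 1) mod 6" | "i' = Suc i" "c = 1" "c' = 5" | "i' = Suc i" "c = 2" "c' = 4"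
    using assms(1) x y by (auto simp: phen_E0_def)
  then show ?thesis
  proof cases
    case 1 then show ?thesis using hex_edge[OF c e, of i j] x y z by simp
  next
    case 2 then show ?thesis using cross_edge[OF e, of i j] x y z by simp
  next
    case 3 then show ?thesis using cross_edge[OF e, of i j] x y z by simp
  qed
qed

lemma DD_edge:
  assumes "phen_E n x y" "z \<in> phen_V n"
  shows "DD x z \<le> DD y z + 1"
  using assms DD_edge0 unfolding phen_E_def by blast

lemma mod_back: "(c::nat) < 6 \<Longrightarrow> ((c + 5) mod 6 + 1) mod 6 = c"
  using six_cases by fastforce

lemma DD_desc:
  assumes x: "x \<in> phen_V n" and z: "z \<in> phen_V n" and ne: "x \<noteq> z"
  shows "\<exists>y. y \<in> phen_V n \<and> phen_E n x y \<and> DD y z + 1 = DD x z"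
proof -
  obtain i c where xi: "x = (i, c)" by (cases x)
  obtain j e where zj: "z = (j, e)" by (cases z)
  have i: "1 \<le> i" "i \<le> n" and c: "c < 6" using x xi by (auto simp: phen_V_def)
  have j: "1 \<le> j" "j \<le> n" and e: "e < 6" using z zj by (auto simp: phen_V_def)
  have ne': "(i, c) \<noteq> (j, e)" using ne xi zj by simp
  note d = desc_arith[OF c e ne']
  have y1: "(i, (c+1) mod 6) \<in> phen_V n \<and> phen_E n (i, c) (i, (c+1) mod 6)"
    using i c by (auto simp: phen_V_def phen_E_def phen_E0_def)
  have y2: "(i, (c+5) mod 6) \<in> phen_V n \<and> phen_E n (i, c) (i, (c+5) mod 6)"
    using i c mod_back[OF c] by (auto simp: phen_V_def phen_E_def phen_E0_def)
  have y3: "c = 1 \<Longrightarrow> i < j \<Longrightarrow> (Suc i, 5) \<in> phen_V n \<and> phen_E n (i, c) (Suc i, 5)"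
    using i j by (auto simp: phen_V_def phen_E_def phen_E0_def)
  have y4: "c = 2 \<Longrightarrow> i < j \<Longrightarrow> (Suc i, 4) \<in> phen_V n \<and> phen_E n (i, c) (Suc i, 4)"
    using i j by (auto simp: phen_V_def phen_E_def phen_E0_def)
  have y5: "c = 5 \<Longrightarrow> j < i \<Longrightarrow> (i - 1, 1) \<in> phen_V n \<and> phen_E n (i, c) (i - 1, 1)"
    using i j by (auto simp: phen_V_def phen_E_def phen_E0_def)
  have y6: "c = 4 \<Longrightarrow> j < i \<Longrightarrow> (i - 1, 2) \<in> phen_V n \<and> phen_E n (i, c) (i - 1, 2)"
    using i j by (auto simp: phen_V_def phen_E_def phen_E0_def)
  show ?thesis unfolding xi zj using d y1 y2 y3 y4 y5 y6 by blast
qed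

lemma gdist_phen:
  assumes "u \<in> phen_V n" "v \<in> phen_V n"
  shows "gdist (phen_V n) (phen_E n) u v = DD u v"
proof (rule gdist_char[where D = DD])
  show "\<And>z. DD z z = 0" by (rule DD_refl)
  show "\<And>x y z. phen_E n x y \<Longrightarrow> x \<in> phen_V n \<Longrightarrow> y \<in> phen_V n \<Longrightarrow> z \<in> phen_V n \<Longrightarrow> DD x z \<le> DD y z + 1"
    using DD_edge by blast
  show "\<And>x z. x \<in> phen_V n \<Longrightarrow> z \<in> phen_V n \<Longrightarrow> x \<noteq> z \<Longrightarrow> \<exists>y. y \<in> phen_V n \<and> phen_E n x y \<and> DD y z + 1 = DD x z"
    using DD_desc by blast
qed (use assms in auto)

lemma nbr_iff:
  assumes "(i, c) \<in> phen_V n" "c' < 6"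
  shows "(i', c') \<in> phen_V n \<and> phen_E n (i, c) (i', c') \<longleftrightarrow>
     (i' = i \<and> (c' = (c + 1) mod 6 \<or> c = (c' + 1) mod 6))
     \<or> (c = 1 \<and> c' = 5 \<and> i' = Suc i \<and> i < n) \<or> (c = 2 \<and> c' = 4 \<and> i' = Suc i \<and> i < n)
     \<or> (c = 5 \<and> c' = 1 \<and> Suc i' = i \<and> 1 < i) \<or> (c = 4 \<and> c' = 2 \<and> Suc i' = i \<and> 1 < i)"
  using assms by (auto simp: phen_V_def phen_E_def phen_E0_def)

lemma deg_formula:
  assumes "(i, c) \<in> phen_V n"
  shows "gdeg (phen_V n) (phen_E n) (i, c) =
     (if ((c = 1 \<or> c = 2) \<and> i < n) \<or> ((c = 4 \<or> c = 5) \<and> 1 < i) then 3 else 2)"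
proof -
  have c: "c < 6" using assms by (simp add: phen_V_def)
  define N where "N = {w \<in> phen_V n. phen_E n (i, c) w}"
  have mem: "(i', c') \<in> N \<longleftrightarrow> c' < 6 \<and> ((i' = i \<and> (c' = (c + 1) mod 6 \<or> c = (c' + 1) mod 6))
     \<or> (c = 1 \<and> c' = 5 \<and> i' = Suc i \<and> i < n) \<or> (c = 2 \<and> c' = 4 \<and> i' = Suc i \<and> i < n)
     \<or> (c = 5 \<and> c' = 1 \<and> Suc i' = i \<and> 1 < i) \<or> (c = 4 \<and> c' = 2 \<and> Suc i' = i \<and> 1 < i))" for i' c'
  proof (cases "c' < 6")
    case True then show ?thesis using nbr_iff[OF assms True] unfolding N_def by auto
  next
    case False then show ?thesis unfolding N_def by (auto simp: phen_V_def)
  qed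
  have mod_eq: "c = (c' + 1) mod 6 \<longleftrightarrow> c' = (c + 5) mod 6" if "c' < 6" for c'
    using six_cases[OF c] six_cases[OF that] by (elim disjE; simp)
  have N_eq: "N = {(i, (c + 1) mod 6), (i, (c + 5) mod 6)}
     \<union> (if c = 1 \<and> i < n then {(Suc i, 5)} else {}) \<union> (if c = 2 \<and> i < n then {(Suc i, 4)} else {})
     \<union> (if c = 5 \<and> 1 < i then {(i - 1, 1)} else {}) \<union> (if c = 4 \<and> 1 < i then {(i - 1, 2)} else {})"
    (is "N = ?R")
  proof (rule set_eqI)
    fix w :: "nat \<times> nat"
    obtain i' c' where w: "w = (i', c')" by (cases w)
    show "w \<in> N \<longleftrightarrow> w \<in> ?R"
      unfolding w mem using mod_eq[of c'] c by (cases "c' < 6") auto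
  qed
  show ?thesis unfolding gdeg_def N_def[symmetric] N_eq
    using six_cases[OF c] by (elim disjE) auto
qed

definition V2 :: "nat \<Rightarrow> (nat \<times> nat) set" where
  "V2 n = ({1..n} \<times> {0, 3}) \<union> ({1..1} \<times> {4, 5}) \<union> ({n..n} \<times> {1, 2})"
definition V3 :: "nat \<Rightarrow> (nat \<times> nat) set" where
  "V3 n = ({1..n-1} \<times> {1, 2}) \<union> ({2..n} \<times> {4, 5})"

lemma V2_char:
  assumes "2 \<le> n"
  shows "{u \<in> phen_V n. gdeg (phen_V n) (phen_E n) u = 2} = V2 n"
proof (rule set_eqI)
  fix u :: "nat \<times> nat"
  obtain i c where u: "u = (i, c)" by (cases u)
  show "u \<in> {u \<in> phen_V n. gdeg (phen_V n) (phen_E n) u = 2} \<longleftrightarrow> u \<in> V2 n"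
  proof (cases "u \<in> phen_V n")
    case True
    then show ?thesis using deg_formula[of i c n] u assms six_cases[of c]
      by (auto simp: V2_def phen_V_def)
  next
    case False
    then show ?thesis using u assms by (auto simp: V2_def phen_V_def)
  qed
qed

lemma V3_char:
  assumes "2 \<le> n"
  shows "{u \<in> phen_V n. gdeg (phen_V n) (phen_E n) u = 3} = V3 n"
proof (rule set_eqI)
  fix u :: "nat \<times> nat"
  obtain i c where u: "u = (i, c)" by (cases u)
  show "u \<in> {u \<in> phen_V n. gdeg (phen_V n) (phen_E n) u = 3} \<longleftrightarrow> u \<in> V3 n"
  proof (cases "u \<in> phen_V n")
    case True
    then show ?thesis using deg_formula[of i c n] u assms six_cases[of c]
      by (auto simp: V3_def phen_V_def)
  next
    case False
    then show ?thesis using u assms by (auto simp: V3_def phen_V_def)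
  qed
qed

lemma base_poly_sum:
  assumes n: "2 \<le> n"
  shows "base_poly (phen_V n) (phen_E n) 2 3 = (\<Sum>v \<in> V3 n. \<Sum>u \<in> V2 n. monom 1 (DD u v))"
proof -
  let ?V = "phen_V n" and ?E = "phen_E n"
  let ?deg = "gdeg ?V ?E"
  have V2s: "\<And>u. u \<in> V2 n \<longleftrightarrow> u \<in> ?V \<and> ?deg u = 2" using V2_char[OF n] by blast
  have V3s: "\<And>u. u \<in> V3 n \<longleftrightarrow> u \<in> ?V \<and> ?deg u = 3" using V3_char[OF n] by blast
  have bp: "base_pairs ?V ?E 2 3 = (\<lambda>(u, v). {u, v}) ` (V2 n \<times> V3 n)"
  proof -
    have "base_pairs ?V ?E 2 3 = {{u, v} | u v. u \<in> V2 n \<and> v \<in> V3 n}"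
      unfolding base_pairs_def
    proof (intro Collect_cong iffI)
      fix x assume "\<exists>u v. x = {u, v} \<and> u \<in> ?V \<and> v \<in> ?V \<and> u \<noteq> v \<and> ?deg u = 2 \<and> ?deg v = 3"
      then show "\<exists>u v. x = {u, v} \<and> u \<in> V2 n \<and> v \<in> V3 n" using V2s V3s by blast
    next
      fix x assume "\<exists>u v. x = {u, v} \<and> u \<in> V2 n \<and> v \<in> V3 n"
      then obtain u v where uv: "x = {u, v}" "u \<in> V2 n" "v \<in> V3 n" by blast
      have "?deg u = 2" "?deg v = 3" using uv V2s V3s by auto
      then have "u \<noteq> v" by auto
      then show "\<exists>u v. x = {u, v} \<and> u \<in> ?V \<and> v \<in> ?V \<and> u \<noteq> v \<and> ?deg u = 2 \<and> ?deg v = 3"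
        using uv V2s V3s by blast
    qed
    also have "\<dots> = (\<lambda>(u, v). {u, v}) ` (V2 n \<times> V3 n)"
      by (auto simp: image_iff)
    finally show ?thesis .
  qed
  have inj: "inj_on (\<lambda>(u, v). {u, v}) (V2 n \<times> V3 n)"
  proof (rule inj_onI)
    fix x y assume x: "x \<in> V2 n \<times> V3 n" and y: "y \<in> V2 n \<times> V3 n"
      and eq: "(\<lambda>(u, v). {u, v}) x = (\<lambda>(u, v). {u, v}) y"
    obtain u v where xu: "x = (u, v)" by (cases x)
    obtain u' v' where yu: "y = (u', v')" by (cases y)
    have d: "?deg u = 2" "?deg v = 3" "?deg u' = 2" "?deg v' = 3"
      using x y xu yu V2s V3s by auto
    have "{u, v} = {u', v'}" using eq xu yu by simp
    then have "u = u' \<and> v = v'" using d by (metis doubleton_eq_iff numeral_eq_iff semiring_norm(89))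
    then show "x = y" using xu yu by simp
  qed
  have pd: "pair_dist ?V ?E {u, v} = DD u v" if "u \<in> ?V" "v \<in> ?V" for u v
  proof -
    have g: "\<And>a b. a \<in> ?V \<Longrightarrow> b \<in> ?V \<Longrightarrow> gdist ?V ?E a b = DD a b" using gdist_phen by blast
    show ?thesis unfolding pair_dist_def
    proof (rule the_equality)
      show "\<exists>a b. {u, v} = {a, b} \<and> DD u v = gdist ?V ?E a b" using g[OF that] by metis
    next
      fix k assume "\<exists>a b. {u, v} = {a, b} \<and> k = gdist ?V ?E a b"
      then obtain a b where ab: "{u, v} = {a, b}" "k = gdist ?V ?E a b" by blast
      then have "(a = u \<and> b = v) \<or> (a = v \<and> b = u)" by (metis doubleton_eq_iff)
      then show "k = DD u v" using ab(2) g[OF that] g[OF that(2) that(1)] DD_sym by metis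
    qed
  qed
  have "base_poly ?V ?E 2 3 = (\<Sum>x \<in> V2 n \<times> V3 n. monom 1 (pair_dist ?V ?E ((\<lambda>(u, v). {u, v}) x)))"
    unfolding base_poly_def bp by (rule sum.reindex[OF inj, unfolded comp_def])
  also have "\<dots> = (\<Sum>x \<in> V2 n \<times> V3 n. monom 1 (DD (fst x) (snd x)))"
  proof (rule sum.cong)
    fix x assume x: "x \<in> V2 n \<times> V3 n"
    obtain u v where "x = (u, v)" by (cases x)
    then show "monom 1 (pair_dist ?V ?E ((\<lambda>(u, v). {u, v}) x)) = monom 1 (DD (fst x) (snd x))"
      using x pd[of u v] V2s V3s by auto
  qed simp
  also have "\<dots> = (\<Sum>u \<in> V2 n. \<Sum>v \<in> V3 n. monom 1 (DD u v))"
    unfolding sum.cartesian_product by (simp add: case_prod_beta)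
  also have "\<dots> = (\<Sum>v \<in> V3 n. \<Sum>u \<in> V2 n. monom 1 (DD u v))"
    by (rule sum.swap)
  finally show ?thesis .
qed

lemma mod3: "(3 * q + k) mod 3 = k mod (3::nat)" by simp
lemma div3: "(3 * q + k) div 3 = q + k div (3::nat)" by simp

lemma key:
  fixes m d i j :: nat
  assumes m: "m \<le> 8"
  shows "(i < j \<and> 3*(j-i) - 2 + m = d) \<longleftrightarrow> ((d+8-m) mod 3 = 0 \<and> 3 \<le> (d+8-m) div 3 \<and> (d+8-m) div 3 \<le> j + 2 \<and> i = j + 2 - (d+8-m) div 3)"
proof
  assume h: "i < j \<and> 3*(j-i) - 2 + m = d"
  define k where "k = j - i"
  have k: "j = i + k" "1 \<le> k" using h unfolding k_def by auto
  then have jk: "j - i = k" by simp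
  obtain k' where k': "k = Suc k'" using k by (cases k) auto
  have "d = 3 * k' + 1 + m" using h jk k' by simp
  then have e: "d + 8 - m = 3 * (k + 2)" using k' by simp
  show "(d+8-m) mod 3 = 0 \<and> 3 \<le> (d+8-m) div 3 \<and> (d+8-m) div 3 \<le> j + 2 \<and> i = j + 2 - (d+8-m) div 3"
    unfolding e using k by simp
next
  assume h: "(d+8-m) mod 3 = 0 \<and> 3 \<le> (d+8-m) div 3 \<and> (d+8-m) div 3 \<le> j + 2 \<and> i = j + 2 - (d+8-m) div 3"
  define N where "N = (d+8-m) div 3"
  have e: "d + 8 - m = 3 * N" using h div_mult_mod_eq[of "d+8-m" 3] unfolding N_def by simp
  have N: "3 \<le> N" "N \<le> j + 2" "i = j + 2 - N" using h unfolding N_def by auto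
  then obtain t where t: "N = t + 3" by (metis add.commute le_Suc_ex)
  then have ij: "i < j" "j - i = t + 1" using N by auto
  have "d + 8 - m = 3 * t + 9" using e t by simp
  then have "d = 3 * t + 1 + m" by linarith
  then show "i < j \<and> 3*(j-i) - 2 + m = d" using ij by simp
qed

lemma key2:
  fixes m d i j :: nat
  assumes m: "m \<le> 8"
  shows "(j < i \<and> 3*(i-j) - 2 + m = d) \<longleftrightarrow> ((d+8-m) mod 3 = 0 \<and> 3 \<le> (d+8-m) div 3 \<and> i = j + (d+8-m) div 3 - 2)"
proof -
  have "(j < i \<and> 3*(i-j) - 2 + m = d) \<longleftrightarrow> ((d+8-m) mod 3 = 0 \<and> 3 \<le> (d+8-m) div 3 \<and> (d+8-m) div 3 \<le> i + 2 \<and> j = i + 2 - (d+8-m) div 3)"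
    by (rule key[OF m])
  also have "\<dots> \<longleftrightarrow> ((d+8-m) mod 3 = 0 \<and> 3 \<le> (d+8-m) div 3 \<and> i = j + (d+8-m) div 3 - 2)"
    by auto
  finally show ?thesis .
qed

lemma hd6_le: "hd6 c e \<le> 3" by (simp add: hd6_def Let_def)
lemma mm_le: "mm c e \<le> 8"
  using hd6_le[of c 1] hd6_le[of 5 e] by (simp add: mm_def)

lemma sum_ind_eq: "finite S \<Longrightarrow> (\<Sum>i\<in>S. (if i = t \<and> P then 1 else 0 :: nat)) = (if P \<and> t \<in> S then 1 else 0)"
proof -
  assume "finite S"
  have "(\<Sum>i\<in>S. (if i = t \<and> P then 1 else 0 :: nat)) = (\<Sum>i\<in>S. (if i = t then (if P then 1 else 0) else 0))"
    by (rule sum.cong) auto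
  also have "\<dots> = (if t \<in> S then (if P then 1 else 0) else 0)" using \<open>finite S\<close> by (simp add: sum.delta')
  finally show ?thesis by simp
qed

lemma inner:
  assumes lo: "1 \<le> lo" and j: "1 \<le> j"
  shows "(\<Sum>i\<in>{lo..hi}. (if DD (i, c) (j, e) = d then 1 else 0 :: nat)) =
    (if hd6 c e = d \<and> lo \<le> j \<and> j \<le> hi then 1 else 0)
  + (if (d+8-mm c e) mod 3 = 0 \<and> 3 \<le> (d+8-mm c e) div 3 \<and> lo + (d+8-mm c e) div 3 - 2 \<le> j \<and> j \<le> hi + (d+8-mm c e) div 3 - 2 then 1 else 0)
  + (if (d+8-mm e c) mod 3 = 0 \<and> 3 \<le> (d+8-mm e c) div 3 \<and> lo + 2 - (d+8-mm e c) div 3 \<le> j \<and> j \<le> hi + 2 - (d+8-mm e c) div 3 then 1 else 0)"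
proof -
  define N1 where "N1 = (d+8-mm c e) div 3"
  define N2 where "N2 = (d+8-mm e c) div 3"
  define ok1 where "ok1 = ((d+8-mm c e) mod 3 = 0)"
  define ok2 where "ok2 = ((d+8-mm e c) mod 3 = 0)"
  have k1: "(i < j \<and> 3*(j-i) - 2 + mm c e = d) \<longleftrightarrow> (ok1 \<and> 3 \<le> N1 \<and> N1 \<le> j + 2 \<and> i = j + 2 - N1)" for i
    unfolding ok1_def N1_def by (rule key[OF mm_le])
  have k2: "(j < i \<and> 3*(i-j) - 2 + mm e c = d) \<longleftrightarrow> (ok2 \<and> 3 \<le> N2 \<and> i = j + N2 - 2)" for i
    unfolding ok2_def N2_def by (rule key2[OF mm_le])
  have pw: "(if DD (i, c) (j, e) = d then 1 else 0 :: nat) =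
      (if i = j \<and> hd6 c e = d then 1 else 0)
    + (if i = j + 2 - N1 \<and> (ok1 \<and> 3 \<le> N1 \<and> N1 \<le> j + 2) then 1 else 0)
    + (if i = j + N2 - 2 \<and> (ok2 \<and> 3 \<le> N2) then 1 else 0)" for i
  proof -
    consider "i = j" | "i < j" | "j < i" by linarith
    then show ?thesis
    proof cases
      case 1
      have "\<not> (i = j + 2 - N1 \<and> (ok1 \<and> 3 \<le> N1 \<and> N1 \<le> j + 2))" using 1 by auto
      moreover have "\<not> (i = j + N2 - 2 \<and> (ok2 \<and> 3 \<le> N2))" using 1 by auto
      ultimately show ?thesis using 1 by simp
    next
      case 2
      have "(DD (i, c) (j, e) = d) \<longleftrightarrow> (i = j + 2 - N1 \<and> (ok1 \<and> 3 \<le> N1 \<and> N1 \<le> j + 2))"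
        using k1[of i] 2 by auto
      moreover have "\<not> (i = j + N2 - 2 \<and> (ok2 \<and> 3 \<le> N2))" using 2 by auto
      ultimately show ?thesis using 2 by simp
    next
      case 3
      have "(DD (i, c) (j, e) = d) \<longleftrightarrow> (i = j + N2 - 2 \<and> (ok2 \<and> 3 \<le> N2))"
        using k2[of i] 3 by auto
      moreover have "\<not> (i = j + 2 - N1 \<and> (ok1 \<and> 3 \<le> N1 \<and> N1 \<le> j + 2))" using 3 by auto
      ultimately show ?thesis using 3 by simp
    qed
  qed
  have "(\<Sum>i\<in>{lo..hi}. (if DD (i, c) (j, e) = d then 1 else 0 :: nat)) =
      (if hd6 c e = d \<and> j \<in> {lo..hi} then 1 else 0)
    + (if (ok1 \<and> 3 \<le> N1 \<and> N1 \<le> j + 2) \<and> j + 2 - N1 \<in> {lo..hi} then 1 else 0)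
    + (if (ok2 \<and> 3 \<le> N2) \<and> j + N2 - 2 \<in> {lo..hi} then 1 else 0)"
    unfolding pw sum.distrib by (simp add: sum_ind_eq)
  also have "\<dots> = (if hd6 c e = d \<and> lo \<le> j \<and> j \<le> hi then 1 else 0)
    + (if ok1 \<and> 3 \<le> N1 \<and> lo + N1 - 2 \<le> j \<and> j \<le> hi + N1 - 2 then 1 else 0)
    + (if ok2 \<and> 3 \<le> N2 \<and> lo + 2 - N2 \<le> j \<and> j \<le> hi + 2 - N2 then 1 else 0)"
  proof -
    have a: "((ok1 \<and> 3 \<le> N1 \<and> N1 \<le> j + 2) \<and> j + 2 - N1 \<in> {lo..hi}) \<longleftrightarrow> (ok1 \<and> 3 \<le> N1 \<and> lo + N1 - 2 \<le> j \<and> j \<le> hi + N1 - 2)"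
      using lo by auto
    have b: "((ok2 \<and> 3 \<le> N2) \<and> j + N2 - 2 \<in> {lo..hi}) \<longleftrightarrow> (ok2 \<and> 3 \<le> N2 \<and> lo + 2 - N2 \<le> j \<and> j \<le> hi + 2 - N2)"
      using j by auto
    show ?thesis unfolding a b by simp
  qed
  finally show ?thesis unfolding N1_def N2_def ok1_def ok2_def .
qed


lemma cnt_eq: "(\<Sum>j\<in>{a..b}. (if x \<le> j \<and> j \<le> y then 1 else 0 :: nat)) = Suc (min b y) - max a x"
proof -
  have "(\<Sum>j\<in>{a..b}. (if x \<le> j \<and> j \<le> y then 1 else 0 :: nat)) = card ({a..b} \<inter> {j. x \<le> j \<and> j \<le> y})"
    by (simp add: sum.If_cases)
  also have "{a..b} \<inter> {j. x \<le> j \<and> j \<le> y} = {max a x..min b y}" by auto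
  finally show ?thesis by simp
qed

lemma sum_if_pull1: "(\<Sum>j\<in>{a..b}. (if P \<and> x \<le> j \<and> j \<le> y then 1 else 0 :: nat)) = (if P then Suc (min b y) - max a x else 0)"
  by (cases P) (auto simp: cnt_eq)

lemma sum_if_pull2: "(\<Sum>j\<in>{a..b}. (if P \<and> P' \<and> x \<le> j \<and> j \<le> y then 1 else 0 :: nat)) = (if P \<and> P' then Suc (min b y) - max a x else 0)"
  using sum_if_pull1[where P = "P \<and> P'"] by simp

lemma RC:
  assumes lo: "1 \<le> lo" and a: "1 \<le> a"
  shows "(\<Sum>j\<in>{a..b}. \<Sum>i\<in>{lo..hi}. (if DD (i, c) (j, e) = d then 1 else 0 :: nat)) =
    (if hd6 c e = d then Suc (min b hi) - max a lo else 0)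
  + (if (d+8-mm c e) mod 3 = 0 \<and> 3 \<le> (d+8-mm c e) div 3 then Suc (min b (hi + (d+8-mm c e) div 3 - 2)) - max a (lo + (d+8-mm c e) div 3 - 2) else 0)
  + (if (d+8-mm e c) mod 3 = 0 \<and> 3 \<le> (d+8-mm e c) div 3 then Suc (min b (hi + 2 - (d+8-mm e c) div 3)) - max a (lo + 2 - (d+8-mm e c) div 3) else 0)"
proof -
  have h: "(\<Sum>j\<in>{a..b}. \<Sum>i\<in>{lo..hi}. (if DD (i, c) (j, e) = d then 1 else 0 :: nat)) =
    (\<Sum>j\<in>{a..b}. (if hd6 c e = d \<and> lo \<le> j \<and> j \<le> hi then 1 else 0)
  + (if (d+8-mm c e) mod 3 = 0 \<and> 3 \<le> (d+8-mm c e) div 3 \<and> lo + (d+8-mm c e) div 3 - 2 \<le> j \<and> j \<le> hi + (d+8-mm c e) div 3 - 2 then 1 else 0)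
  + (if (d+8-mm e c) mod 3 = 0 \<and> 3 \<le> (d+8-mm e c) div 3 \<and> lo + 2 - (d+8-mm e c) div 3 \<le> j \<and> j \<le> hi + 2 - (d+8-mm e c) div 3 then 1 else 0))"
    by (rule sum.cong) (use inner[OF lo] a in auto)
  show ?thesis
    unfolding h sum.distrib
    by (simp only: sum_if_pull1 sum_if_pull2)
qed

lemma sum_times2:
  assumes "x \<noteq> y" "finite A"
  shows "sum g (A \<times> {x, y}) = (\<Sum>i\<in>A. g (i, x)) + (\<Sum>i\<in>A. g (i, y))"
proof -
  have "sum g (A \<times> {x, y}) = (\<Sum>i\<in>A. \<Sum>c\<in>{x, y}. g (i, c))"
    by (simp add: sum.cartesian_product)
  also have "\<dots> = (\<Sum>i\<in>A. g (i, x) + g (i, y))" using assms(1) by simp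
  finally show ?thesis by (simp add: sum.distrib)
qed

lemma sum_V3:
  assumes "2 \<le> n"
  shows "sum g (V3 n) = (\<Sum>j\<in>{1..n-1}. g (j, 1)) + (\<Sum>j\<in>{1..n-1}. g (j, 2))
     + (\<Sum>j\<in>{2..n}. g (j, 4)) + (\<Sum>j\<in>{2..n}. g (j, 5))"
proof -
  have "sum g (V3 n) = sum g ({1..n-1} \<times> {1, 2}) + sum g ({2..n} \<times> {4, 5})"
    unfolding V3_def by (rule sum.union_disjoint) auto
  then show ?thesis by (simp add: sum_times2 add.assoc)
qed

lemma sum_V2:
  assumes "2 \<le> n"
  shows "sum g (V2 n) = (\<Sum>i\<in>{1..n}. g (i, 0)) + (\<Sum>i\<in>{1..n}. g (i, 3))
     + (\<Sum>i\<in>{1..1}. g (i, 4)) + (\<Sum>i\<in>{1..1}. g (i, 5))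
     + (\<Sum>i\<in>{n..n}. g (i, 1)) + (\<Sum>i\<in>{n..n}. g (i, 2))"
proof -
  have "sum g (V2 n) = sum g ({1..n} \<times> {0, 3} \<union> {1..1} \<times> {4, 5}) + sum g ({n..n} \<times> {1, 2})"
    unfolding V2_def by (rule sum.union_disjoint) auto
  also have "sum g ({1..n} \<times> {0, 3} \<union> {1..1} \<times> {4, 5}) = sum g ({1..n} \<times> {0, 3}) + sum g ({1..1} \<times> {4, 5})"
    by (rule sum.union_disjoint) auto
  finally show ?thesis by (simp add: sum_times2 add.assoc)
qed

definition RCf :: "nat \<Rightarrow> nat \<Rightarrow> nat \<Rightarrow> nat \<Rightarrow> nat \<Rightarrow> nat \<Rightarrow> nat \<Rightarrow> nat" where
  "RCf lo hi c a b e d =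
    (if hd6 c e = d then Suc (min b hi) - max a lo else 0)
  + (if (d+8-mm c e) mod 3 = 0 \<and> 3 \<le> (d+8-mm c e) div 3 then Suc (min b (hi + (d+8-mm c e) div 3 - 2)) - max a (lo + (d+8-mm c e) div 3 - 2) else 0)
  + (if (d+8-mm e c) mod 3 = 0 \<and> 3 \<le> (d+8-mm e c) div 3 then Suc (min b (hi + 2 - (d+8-mm e c) div 3)) - max a (lo + 2 - (d+8-mm e c) div 3) else 0)"

definition LC :: "nat \<Rightarrow> nat \<Rightarrow> nat" where
  "LC n d = (RCf 1 n 0 1 (n - 1) 1 d + RCf 1 n 0 1 (n - 1) 2 d + RCf 1 n 0 2 n 4 d + RCf 1 n 0 2 n 5 d) +
    (RCf 1 n 3 1 (n - 1) 1 d + RCf 1 n 3 1 (n - 1) 2 d + RCf 1 n 3 2 n 4 d + RCf 1 n 3 2 n 5 d) +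
    (RCf 1 1 4 1 (n - 1) 1 d + RCf 1 1 4 1 (n - 1) 2 d + RCf 1 1 4 2 n 4 d + RCf 1 1 4 2 n 5 d) +
    (RCf 1 1 5 1 (n - 1) 1 d + RCf 1 1 5 1 (n - 1) 2 d + RCf 1 1 5 2 n 4 d + RCf 1 1 5 2 n 5 d) +
    (RCf n n 1 1 (n - 1) 1 d + RCf n n 1 1 (n - 1) 2 d + RCf n n 1 2 n 4 d + RCf n n 1 2 n 5 d) +
    (RCf n n 2 1 (n - 1) 1 d + RCf n n 2 1 (n - 1) 2 d + RCf n n 2 2 n 4 d + RCf n n 2 2 n 5 d)"

lemma coeff_lhs:
  assumes n: "2 \<le> n"
  shows "coeff (\<Sum>v \<in> V3 n. \<Sum>u \<in> V2 n. monom (1::nat) (DD u v)) d = LC n d"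
proof -
  have n1: "1 \<le> n" using n by simp
  have "coeff (\<Sum>v \<in> V3 n. \<Sum>u \<in> V2 n. monom (1::nat) (DD u v)) d = (\<Sum>v \<in> V3 n. \<Sum>u \<in> V2 n. (if DD u v = d then 1 else 0::nat))"
    unfolding coeff_sum coeff_monom by (rule refl)
  also have "\<dots> = LC n d"
    unfolding sum_V3[OF n] sum_V2[OF n] sum.distrib LC_def
    by (simp only: RC order_refl n1 RCf_def[symmetric])
  finally show ?thesis .
qed

definition S3 :: "nat \<Rightarrow> nat \<Rightarrow> nat \<Rightarrow> (nat \<Rightarrow> nat) \<Rightarrow> nat \<Rightarrow> nat" where
  "S3 a b m f d = (if (d+8-m) mod 3 = 0 \<and> a + 2 \<le> (d+8-m) div 3 \<and> (d+8-m) div 3 \<le> b + 2 then f ((d+8-m) div 3 - 2) else 0)"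

definition TC :: "nat \<Rightarrow> nat \<Rightarrow> nat" where
  "TC n d = (if d = 1 then 2*(2*n-2) else 0) + S3 2 (n-1) 0 (\<lambda>k. 4*(n-k+1)) d
     + S3 1 (n-1) 1 (\<lambda>k. 4*(2*n-2*k+1)) d + S3 1 (n-1) 2 (\<lambda>k. 4*(n-k+2)) d + (if d = 3*n-2 then 4 else 0)"

lemma by_offset:
  assumes "\<And>t. t \<le> 8 \<Longrightarrow> P (Q + t)" "\<And>s. P (Q + 9 + s)" "Q \<le> (n::nat)"
  shows "P n"
proof (cases "n \<le> Q + 8")
  case True
  then show ?thesis using assms(1)[of "n - Q"] assms(3) by simp
next
  case False
  then show ?thesis using assms(2)[of "n - Q - 9"] by simp
qed

lemma upto8: "(t::nat) \<le> 8 \<Longrightarrow> t = 0 \<or> t = 1 \<or> t = 2 \<or> t = 3 \<or> t = 4 \<or> t = 5 \<or> t = 6 \<or> t = 7 \<or> t = 8"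
  by auto

lemmas simps = LC_def RCf_def TC_def S3_def hd6_def mm_def mod3 div3 min_def max_def


lemma r0_q0: "2 \<le> n \<Longrightarrow> LC n (3 * 0 + 0) = TC n (3 * 0 + 0)"
  apply (rule by_offset[where Q = 2 and P = "\<lambda>n. LC n (3 * 0 + 0) = TC n (3 * 0 + 0)"])
    apply (drule upto8; elim disjE; simp add: simps)
   apply (simp add: simps)
  apply simp
  done

lemma r0_q1: "2 \<le> n \<Longrightarrow> LC n (3 * 1 + 0) = TC n (3 * 1 + 0)"
  apply (rule by_offset[where Q = 2 and P = "\<lambda>n. LC n (3 * 1 + 0) = TC n (3 * 1 + 0)"])
    apply (drule upto8; elim disjE; simp add: simps)
   apply (simp add: simps)
  apply simp
  done

lemma r0_q2: "p + 2 \<le> n \<Longrightarrow> LC n (3 * (p + 2) + 0) = TC n (3 * (p + 2) + 0)"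
  apply (rule by_offset[where Q = "p + 2" and P = "\<lambda>n. LC n (3 * (p + 2) + 0) = TC n (3 * (p + 2) + 0)"])
    apply (drule upto8; elim disjE; simp add: simps)
   apply (simp add: simps)
  apply simp
  done



lemma r1_q0: "2 \<le> n \<Longrightarrow> LC n (3 * 0 + 1) = TC n (3 * 0 + 1)"
  apply (rule by_offset[where Q = 2 and P = "\<lambda>n. LC n (3 * 0 + 1) = TC n (3 * 0 + 1)"])
    apply (drule upto8; elim disjE; simp add: simps)
   apply (simp add: simps)
  apply simp
  done

lemma r1_q1: "2 \<le> n \<Longrightarrow> LC n (3 * 1 + 1) = TC n (3 * 1 + 1)"
  apply (rule by_offset[where Q = 2 and P = "\<lambda>n. LC n (3 * 1 + 1) = TC n (3 * 1 + 1)"])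
    apply (drule upto8; elim disjE; simp add: simps)
   apply (simp add: simps)
  apply simp
  done

lemma r1_q2: "p + 2 \<le> n \<Longrightarrow> LC n (3 * (p + 2) + 1) = TC n (3 * (p + 2) + 1)"
  apply (rule by_offset[where Q = "p + 2" and P = "\<lambda>n. LC n (3 * (p + 2) + 1) = TC n (3 * (p + 2) + 1)"])
    apply (drule upto8; elim disjE; simp add: simps)
   apply (simp add: simps)
  apply simp
  done



lemma r2_q0: "2 \<le> n \<Longrightarrow> LC n (3 * 0 + 2) = TC n (3 * 0 + 2)"
  apply (rule by_offset[where Q = 2 and P = "\<lambda>n. LC n (3 * 0 + 2) = TC n (3 * 0 + 2)"])
    apply (drule upto8; elim disjE; simp add: simps)
   apply (simp add: simps)
  apply simp
  done

lemma r2_q1: "2 \<le> n \<Longrightarrow> LC n (3 * 1 + 2) = TC n (3 * 1 + 2)"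
  apply (rule by_offset[where Q = 2 and P = "\<lambda>n. LC n (3 * 1 + 2) = TC n (3 * 1 + 2)"])
    apply (drule upto8; elim disjE; simp add: simps)
   apply (simp add: simps)
  apply simp
  done

lemma r2_q2: "p + 2 \<le> n \<Longrightarrow> LC n (3 * (p + 2) + 2) = TC n (3 * (p + 2) + 2)"
  apply (rule by_offset[where Q = "p + 2" and P = "\<lambda>n. LC n (3 * (p + 2) + 2) = TC n (3 * (p + 2) + 2)"])
    apply (drule upto8; elim disjE; simp add: simps)
   apply (simp add: simps)
  apply simp
  done

lemma coeff_sum3:
  assumes a: "1 \<le> a" and m: "m \<le> 8"
  shows "coeff (\<Sum>k\<in>{a..b}. monom (f k) (3*k - 2 + m)) d = S3 a b m f d"
proof -
  define N where "N = (d+8-m) div 3"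
  define ok where "ok = ((d+8-m) mod 3 = 0)"
  have eq: "(3*k - 2 + m = d) \<longleftrightarrow> (k = N - 2 \<and> (ok \<and> 3 \<le> N))" if k: "1 \<le> k" for k
  proof -
    have "(0 < k \<and> 3*(k-0) - 2 + m = d) \<longleftrightarrow> (ok \<and> 3 \<le> N \<and> N \<le> k + 2 \<and> 0 = k + 2 - N)"
      unfolding ok_def N_def by (rule key[OF m])
    then show ?thesis using k by auto
  qed
  have "coeff (\<Sum>k\<in>{a..b}. monom (f k) (3*k - 2 + m)) d = (\<Sum>k\<in>{a..b}. (if 3*k - 2 + m = d then f k else 0))"
    unfolding coeff_sum coeff_monom by (rule refl)
  also have "\<dots> = (\<Sum>k\<in>{a..b}. (if k = N - 2 then (if ok \<and> 3 \<le> N then f k else 0) else 0))"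
    by (rule sum.cong) (use eq a in auto)
  also have "\<dots> = (if N - 2 \<in> {a..b} then (if ok \<and> 3 \<le> N then f (N - 2) else 0) else 0)"
    by (simp add: sum.delta')
  also have "\<dots> = S3 a b m f d"
    unfolding S3_def N_def[symmetric] ok_def[symmetric] using a by auto
  finally show ?thesis .
qed

lemma coeff_rhs:
  assumes n: "2 \<le> n"
  shows "coeff (monom (2 * (2 * n - 2)) 1
    + (\<Sum>k = 2..n - 1. monom (4 * (n - k + 1)) (3 * k - 2))
    + (\<Sum>k = 1..n - 1. monom (4 * (2 * n - 2 * k + 1)) (3 * k - 1))
    + (\<Sum>k = 1..n - 1. monom (4 * (n - k + 2)) (3 * k))
    + monom 4 (3 * n - 2)) d = TC n d"
proof -
  have s1: "(\<Sum>k = 2..n - 1. monom (4 * (n - k + 1)) (3 * k - 2)) = (\<Sum>k = 2..n - 1. monom (4 * (n - k + 1)) (3 * k - 2 + 0))"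
    by simp
  have s2: "(\<Sum>k = 1..n - 1. monom (4 * (2 * n - 2 * k + 1)) (3 * k - 1)) = (\<Sum>k = 1..n - 1. monom (4 * (2 * n - 2 * k + 1)) (3 * k - 2 + 1))"
  proof (rule sum.cong[OF refl])
    fix k assume "k \<in> {1..n - 1}"
    then have e: "3 * k - 1 = 3 * k - 2 + (1::nat)" by auto
    show "monom (4 * (2 * n - 2 * k + 1)) (3 * k - 1) = monom (4 * (2 * n - 2 * k + 1)) (3 * k - 2 + 1)"
      by (simp only: e)
  qed
  have s3: "(\<Sum>k = 1..n - 1. monom (4 * (n - k + 2)) (3 * k)) = (\<Sum>k = 1..n - 1. monom (4 * (n - k + 2)) (3 * k - 2 + 2))"
  proof (rule sum.cong[OF refl])
    fix k assume "k \<in> {1..n - 1}"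
    then have e: "3 * k = 3 * k - 2 + (2::nat)" by auto
    show "monom (4 * (n - k + 2)) (3 * k) = monom (4 * (n - k + 2)) (3 * k - 2 + 2)"
      by (simp only: e[symmetric])
  qed
  have c1: "coeff (\<Sum>k = 2..n - 1. monom (4 * (n - k + 1)) (3 * k - 2 + 0)) d = S3 2 (n - 1) 0 (\<lambda>k. 4 * (n - k + 1)) d"
    by (rule coeff_sum3) auto
  have c2: "coeff (\<Sum>k = 1..n - 1. monom (4 * (2 * n - 2 * k + 1)) (3 * k - 2 + 1)) d = S3 1 (n - 1) 1 (\<lambda>k. 4 * (2 * n - 2 * k + 1)) d"
    by (rule coeff_sum3) auto
  have c3: "coeff (\<Sum>k = 1..n - 1. monom (4 * (n - k + 2)) (3 * k - 2 + 2)) d = S3 1 (n - 1) 2 (\<lambda>k. 4 * (n - k + 2)) d"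
    by (rule coeff_sum3) auto
  show ?thesis
    unfolding s1 s2 s3 coeff_add c1 c2 c3
    unfolding TC_def coeff_monom by auto
qed

lemma mm_le5:
  assumes "c < 6" "e < 6" shows "mm c e \<le> 5"
  using six_cases[OF assms(1)] six_cases[OF assms(2)] by (elim disjE) (simp_all add: hd6_def mm_def)

lemma DD_bound:
  assumes "(i, c) \<in> phen_V n" "(j, e) \<in> phen_V n"
  shows "DD (i, c) (j, e) \<le> 3 * n"
proof -
  have h: "1 \<le> i" "i \<le> n" "c < 6" "1 \<le> j" "j \<le> n" "e < 6" using assms by (auto simp: phen_V_def)
  have "hd6 c e \<le> 3" by (rule hd6_le)
  moreover have "mm c e \<le> 5" "mm e c \<le> 5" using mm_le5 h by auto
  ultimately show ?thesis using h by auto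
qed

lemma LC_big:
  assumes n: "2 \<le> n" and d: "3 * n < d"
  shows "LC n d = 0"
proof -
  have "LC n d = (\<Sum>v \<in> V3 n. \<Sum>u \<in> V2 n. (if DD u v = d then 1 else 0::nat))"
    using coeff_lhs[OF n, of d] unfolding coeff_sum coeff_monom by simp
  also have "\<dots> = 0"
  proof (intro sum.neutral ballI)
    fix v u assume v: "v \<in> V3 n" and u: "u \<in> V2 n"
    have "u \<in> phen_V n" "v \<in> phen_V n" using u v V2_char[OF n] V3_char[OF n] by auto
    then have "DD u v \<le> 3 * n" using DD_bound by (cases u, cases v) auto
    then show "(if DD u v = d then 1 else 0::nat) = 0" using d by auto
  qed
  finally show ?thesis .
qed

lemma TC_big:
  assumes n: "2 \<le> n" and d: "3 * n < d"
  shows "TC n d = 0"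
proof -
  have b: "n + 2 \<le> (d + 8 - m) div 3" if "m \<le> 2" for m
  proof -
    have "3 * (n + 2) \<le> d + 8 - m" using d that by arith
    then have "3 * (n + 2) div 3 \<le> (d + 8 - m) div 3" by (rule div_le_mono)
    then show ?thesis by simp
  qed
  have "\<not> ((d+8-m) div 3 \<le> n - 1 + 2)" if "m \<le> 2" for m using b[OF that] n by linarith
  then show ?thesis using d n unfolding TC_def S3_def by auto
qed

lemma final:
  assumes n: "2 \<le> n"
  shows "LC n d = TC n d"
proof (cases "3 * n < d")
  case True
  then show ?thesis using LC_big[OF n] TC_big[OF n] by simp
next
  case False
  define q where "q = d div 3"
  define r where "r = d mod 3"
  have d: "d = 3 * q + r" unfolding q_def r_def by simp
  have r: "r = 0 \<or> r = 1 \<or> r = 2" unfolding r_def by auto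
  have qn: "q \<le> n" using False d by linarith
  consider "q = 0" | "q = 1" | "2 \<le> q" by linarith
  then show ?thesis
  proof cases
    case 1
    show ?thesis using r
    proof (elim disjE)
      assume rr: "r = 0" show ?thesis unfolding d 1 rr by (rule r0_q0[OF n])
    next
      assume rr: "r = 1" show ?thesis unfolding d 1 rr by (rule r1_q0[OF n])
    next
      assume rr: "r = 2" show ?thesis unfolding d 1 rr by (rule r2_q0[OF n])
    qed
  next
    case 2
    show ?thesis using r
    proof (elim disjE)
      assume rr: "r = 0" show ?thesis unfolding d 2 rr by (rule r0_q1[OF n])
    next
      assume rr: "r = 1" show ?thesis unfolding d 2 rr by (rule r1_q1[OF n])
    next
      assume rr: "r = 2" show ?thesis unfolding d 2 rr by (rule r2_q1[OF n])
    qed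
  next
    case 3
    define p where "p = q - 2"
    have qp: "q = p + 2" using 3 unfolding p_def by simp
    have qn: "p + 2 \<le> n" using qn qp by simp
    show ?thesis using r
    proof (elim disjE)
      assume rr: "r = 0" show ?thesis unfolding d qp rr by (rule r0_q2[OF qn])
    next
      assume rr: "r = 1" show ?thesis unfolding d qp rr by (rule r1_q2[OF qn])
    next
      assume rr: "r = 2" show ?thesis unfolding d qp rr by (rule r2_q2[OF qn])
    qed
  qed
qed

theorem theorem2p2:
  fixes n :: nat
  assumes "n \<ge> 2"
  shows "base_poly (phen_V n) (phen_E n) 2 3 =
      monom (2 * (2 * n - 2)) 1
    + (\<Sum>k = 2..n - 1. monom (4 * (n - k + 1)) (3 * k - 2))
    + (\<Sum>k = 1..n - 1. monom (4 * (2 * n - 2 * k + 1)) (3 * k - 1))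
    + (\<Sum>k = 1..n - 1. monom (4 * (n - k + 2)) (3 * k))
    + monom 4 (3 * n - 2)"
proof -
  have n: "2 \<le> n" using assms by simp
  have "base_poly (phen_V n) (phen_E n) 2 3 = (\<Sum>v \<in> V3 n. \<Sum>u \<in> V2 n. monom 1 (DD u v))"
    by (rule base_poly_sum[OF n])
  also have "\<dots> = monom (2 * (2 * n - 2)) 1
    + (\<Sum>k = 2..n - 1. monom (4 * (n - k + 1)) (3 * k - 2))
    + (\<Sum>k = 1..n - 1. monom (4 * (2 * n - 2 * k + 1)) (3 * k - 1))
    + (\<Sum>k = 1..n - 1. monom (4 * (n - k + 2)) (3 * k))
    + monom 4 (3 * n - 2)"
  proof (rule poly_eqI)
    fix d
    show "coeff (\<Sum>v \<in> V3 n. \<Sum>u \<in> V2 n. monom 1 (DD u v)) d = coeff (monom (2 * (2 * n - 2)) 1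
    + (\<Sum>k = 2..n - 1. monom (4 * (n - k + 1)) (3 * k - 2))
    + (\<Sum>k = 1..n - 1. monom (4 * (2 * n - 2 * k + 1)) (3 * k - 1))
    + (\<Sum>k = 1..n - 1. monom (4 * (n - k + 2)) (3 * k))
    + monom 4 (3 * n - 2)) d"
      unfolding coeff_lhs[OF n] coeff_rhs[OF n] by (rule final[OF n])
  qed
  finally show ?thesis .
qed

end
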